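(* Let $m\ge 2$ and let $T$ be any hierarchy of size $m$. Let $H(x)=\sum_{n\ge1}H_nx^n$, where $H_n$ is the number of isomorphism classes of hierarchies of size $n$, and let $H^{(m)}(x)=\sum_{n\ge1}H^{(m)}_nx^n$, where $H^{(m)}_n$ is the number of isomorphism classes of hierarchies of size $n$ that do not contain a subhierarchy isomorphic to $T$. Then the radius of convergence of $H^{(m)}(x)$ is strictly larger than the radius of convergence of $H(x)$.
   Context: A hierarchy is a finite rooted unordered tree in which no vertex has exactly one child; its size is its number of leaves. For a vertex $v$ of a hierarchy, the subhierarchy at $v$ is the hierarchy induced by $v$ and all its descendants (with root $v$); a hierarchy contains $T$ as a subhierarchy if the subhierarchy at some vertex (possibly the root) is isomorphic to $T$ as a rooted tree. *)

theory Defs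
  imports "HOL-Analysis.Analysis" "HOL-Library.Multiset"
begin

text \<open>Finite rooted unordered trees, up to isomorphism: a vertex is given by the
multiset of (isomorphism classes of) subtrees at its children. Two such values are
equal iff the corresponding rooted trees are isomorphic.\<close>

datatype tree = Node "tree multiset"

primrec children :: "tree \<Rightarrow> tree multiset" where
  "children (Node M) = M"

primrec leaves :: "tree \<Rightarrow> nat" where
  "leaves (Node M) = (if M = {#} then 1 else sum_mset (image_mset leaves M))"

inductive subtree_of :: "tree \<Rightarrow> tree \<Rightarrow> bool" where
  refl: "subtree_of t t"
| step: "s \<in># M \<Longrightarrow> subtree_of t s \<Longrightarrow> subtree_of t (Node M)"

definition hierarchy :: "tree \<Rightarrow> bool" where
  "hierarchy t \<longleftrightarrow> (\<forall>s. subtree_of s t \<longrightarrow> size (children s) \<noteq> 1)"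

definition contains_sub :: "tree \<Rightarrow> tree \<Rightarrow> bool" where
  "contains_sub t T \<longleftrightarrow> subtree_of T t"

definition H :: "nat \<Rightarrow> nat" where
  "H n = card {t. hierarchy t \<and> leaves t = n}"

definition H_avoid :: "tree \<Rightarrow> nat \<Rightarrow> nat" where
  "H_avoid T n = card {t. hierarchy t \<and> leaves t = n \<and> \<not> contains_sub t T}"

end

theory Submission
  imports Defs
begin


definition leaf :: tree where "leaf = Node {#}"

lemma sum_mset_ge_elem: "x \<in># M \<Longrightarrow> (f x::nat) \<le> sum_mset (image_mset f M)"
  by (metis image_mset_add_mset insert_DiffM le_add1 sum_mset.insert)

lemma size_le_sum: "(\<And>x. x \<in># M \<Longrightarrow> 1 \<le> (f x::nat)) \<Longrightarrow> size M \<le> sum_mset (image_mset f M)"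
proof (induction M)
  case (add x M)
  then have "1 \<le> f x" "size M \<le> sum_mset (image_mset f M)" by auto
  then show ?case by simp
qed simp

lemma leaves_ge1: "leaves t \<ge> 1"
proof (induction t)
  case (Node M)
  show ?case
  proof (cases "M = {#}")
    case False
    then obtain x where x: "x \<in># M" by blast
    then have "leaves x \<le> sum_mset (image_mset leaves M)"
      by (rule sum_mset_ge_elem)
    with Node.IH[OF x] False show ?thesis by auto
  qed simp
qed

lemma subtree_Node: "subtree_of s (Node M) \<longleftrightarrow> s = Node M \<or> (\<exists>x\<in>#M. subtree_of s x)"
  by (subst subtree_of.simps) auto

lemma hierarchy_Node: "hierarchy (Node M) \<longleftrightarrow> size M \<noteq> 1 \<and> (\<forall>x\<in>#M. hierarchy x)"
  unfolding hierarchy_def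
proof safe
  fix x s assume "\<forall>s. subtree_of s (Node M) \<longrightarrow> size (children s) \<noteq> 1" "x \<in># M" "subtree_of s x" "size (children s) = 1"
  then show False by (meson subtree_of.step)
next
  assume "\<forall>s. subtree_of s (Node M) \<longrightarrow> size (children s) \<noteq> 1" "size M = 1"
  then show False using subtree_of.refl[of "Node M"] by (metis children.simps)
next
  fix s assume "size M \<noteq> 1" "\<forall>x\<in>#M. \<forall>s. subtree_of s x \<longrightarrow> size (children s) \<noteq> 1"
    "subtree_of s (Node M)" "size (children s) = 1"
  then show False by (auto simp: subtree_Node)
qed

lemma contains_Node: "contains_sub (Node M) T \<longleftrightarrow> T = Node M \<or> (\<exists>x\<in>#M. contains_sub x T)"
  unfolding contains_sub_def by (rule subtree_Node)

lemma subtree_leaves: "subtree_of s t \<Longrightarrow> leaves s \<le> leaves t"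
proof (induction rule: subtree_of.induct)
  case (step s M t)
  then have "M \<noteq> {#}" by auto
  then have "leaves (Node M) = sum_mset (image_mset leaves M)" by simp
  moreover have "leaves s \<le> sum_mset (image_mset leaves M)" using step(1) by (rule sum_mset_ge_elem)
  ultimately show ?case using step(3) by simp
qed simp

lemma hier_size2: "hierarchy (Node M) \<Longrightarrow> M \<noteq> {#} \<Longrightarrow> 2 \<le> size M"
  by (cases "size M") (auto simp: hierarchy_Node)

lemma leaves_ge_size: "size M \<le> leaves (Node M) \<or> M = {#}"
  using size_le_sum[of M leaves] leaves_ge1 by auto

lemma hier_leaves1: "hierarchy t \<Longrightarrow> leaves t = 1 \<Longrightarrow> t = leaf"
proof (cases t)
  case (Node M)
  assume h: "hierarchy t" "leaves t = 1"
  show ?thesis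
  proof (cases "M = {#}")
    case False
    then have "2 \<le> size M" using h Node hier_size2 by auto
    moreover have "size M \<le> leaves t" using leaves_ge_size[of M] False Node by auto
    ultimately show ?thesis using h by auto
  qed (simp add: Node leaf_def)
qed

lemma child_less: "2 \<le> size M \<Longrightarrow> x \<in># M \<Longrightarrow> leaves x < leaves (Node M)"
proof -
  assume s: "2 \<le> size M" and x: "x \<in># M"
  obtain M' where M: "M = add_mset x M'" using x by (metis insert_DiffM)
  then have "M' \<noteq> {#}" using s by auto
  then obtain y where y: "y \<in># M'" by blast
  have "1 \<le> leaves y" by (rule leaves_ge1)
  also have "leaves y \<le> sum_mset (image_mset leaves M')" using y by (rule sum_mset_ge_elem)
  finally show ?thesis using M by simp
qed

lemma count_le_leaves: "count M x \<le> leaves (Node M)"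
proof (cases "M = {#}")
  case False
  then show ?thesis using leaves_ge_size[of M] by (meson count_le_size order_trans)
qed simp

definition MSb :: "tree set \<Rightarrow> nat \<Rightarrow> tree multiset set" where
  "MSb S J = {M. set_mset M \<subseteq> S \<and> (\<forall>t. count M t < J)}"

definition wt :: "real \<Rightarrow> tree multiset \<Rightarrow> real" where
  "wt y M = y ^ sum_mset (image_mset leaves M)"

lemma MSb_empty: "J \<ge> 1 \<Longrightarrow> MSb {} J = {{#}}"
  unfolding MSb_def by auto

lemma MSb_insert:
  assumes "a \<notin> S"
  shows "MSb (insert a S) J = (\<lambda>(M,j). M + replicate_mset j a) ` (MSb S J \<times> {..<J})"
proof
  have "M + replicate_mset j a \<in> MSb (insert a S) J" if M: "M \<in> MSb S J" and j: "j \<in> {..<J}" for M j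
  proof -
    have "count M a = 0" using M assms unfolding MSb_def by (auto simp: count_eq_zero_iff)
    then show "M + replicate_mset j a \<in> MSb (insert a S) J"
      using M j unfolding MSb_def by (auto simp: count_replicate_mset split: if_splits)
  qed
  then show "(\<lambda>(M,j). M + replicate_mset j a) ` (MSb S J \<times> {..<J}) \<subseteq> MSb (insert a S) J"
    by auto
next
  show "MSb (insert a S) J \<subseteq> (\<lambda>(M,j). M + replicate_mset j a) ` (MSb S J \<times> {..<J})"
  proof
    fix M' assume M': "M' \<in> MSb (insert a S) J"
    define M where "M = filter_mset (\<lambda>x. x \<noteq> a) M'"
    have eq: "M' = M + replicate_mset (count M' a) a"
      unfolding M_def by (rule multiset_eqI) (auto simp: count_replicate_mset)
    have "M \<in> MSb S J" using M' unfolding M_def MSb_def by auto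
    moreover have "count M' a \<in> {..<J}" using M' unfolding MSb_def by auto
    ultimately show "M' \<in> (\<lambda>(M,j). M + replicate_mset j a) ` (MSb S J \<times> {..<J})"
      using eq by force
  qed
qed

lemma MSb_inj:
  assumes "a \<notin> S"
  shows "inj_on (\<lambda>(M,j). M + replicate_mset j a) (MSb S J \<times> {..<J})"
proof (rule inj_onI, clarify)
  fix M1 j1 M2 j2 assume M1: "M1 \<in> MSb S J" and M2: "M2 \<in> MSb S J"
    and e: "M1 + replicate_mset j1 a = M2 + replicate_mset j2 a"
  have "count M1 a = 0" "count M2 a = 0" using M1 M2 assms unfolding MSb_def by (auto simp: count_eq_zero_iff)
  then have "j1 = j2" using arg_cong[OF e, of "\<lambda>X. count X a"] by simp
  then show "M1 = M2 \<and> j1 = j2" using e by simp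
qed

lemma MSb_prod:
  assumes "finite S" "J \<ge> 1"
  shows "finite (MSb S J) \<and> sum (wt y) (MSb S J) = (\<Prod>t\<in>S. \<Sum>j<J. (y ^ leaves t) ^ j)"
  using assms(1)
proof (induction S rule: finite_induct)
  case empty
  then show ?case using assms(2) by (simp add: MSb_empty wt_def)
next
  case (insert a S)
  have fin: "finite (MSb (insert a S) J)"
    using insert by (simp add: MSb_insert)
  have "sum (wt y) (MSb (insert a S) J) = sum (wt y \<circ> (\<lambda>(M,j). M + replicate_mset j a)) (MSb S J \<times> {..<J})"
    unfolding MSb_insert[OF insert(2)] by (rule sum.reindex[OF MSb_inj[OF insert(2)]])
  also have "\<dots> = (\<Sum>(M,j)\<in>MSb S J \<times> {..<J}. wt y M * (y ^ leaves a) ^ j)"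
  proof (rule sum.cong, simp, clarify)
    fix M j
    have "y ^ (j * leaves a) = (y ^ leaves a) ^ j" by (metis power_mult mult.commute)
    then show "(wt y \<circ> (\<lambda>(M,j). M + replicate_mset j a)) (M, j) = wt y M * (y ^ leaves a) ^ j"
      by (simp add: wt_def power_add)
  qed
  also have "\<dots> = sum (wt y) (MSb S J) * (\<Sum>j<J. (y ^ leaves a) ^ j)"
    by (simp add: sum_product sum.cartesian_product)
  also have "\<dots> = (\<Prod>t\<in>insert a S. \<Sum>j<J. (y ^ leaves t) ^ j)"
    using insert by (simp add: mult.commute)
  finally show ?case using fin by simp
qed


lemma inj_Node: "inj_on Node A" by (auto intro: inj_onI)

lemma leaves_Node_wt: "M \<noteq> {#} \<Longrightarrow> y ^ leaves (Node M) = wt y M"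
  by (simp add: wt_def)

definition HS :: "nat \<Rightarrow> tree set" where "HS N = {t. hierarchy t \<and> leaves t < N}"

lemma decomp:
  assumes "hierarchy t" "leaves t < Suc N" "2 \<le> leaves t"
  shows "t = Node (children t) \<and> 2 \<le> size (children t) \<and> children t \<in> MSb (HS N) (N+2)"
proof -
  obtain M where t: "t = Node M" by (cases t)
  have "M \<noteq> {#}" using assms t by auto
  then have s: "2 \<le> size M" using hier_size2 assms t by auto
  have "\<forall>x\<in>#M. hierarchy x" using assms t by (simp add: hierarchy_Node)
  moreover have "\<forall>x\<in>#M. leaves x < N" using child_less[OF s] assms t by fastforce
  moreover have "\<forall>x. count M x < N + 2" using count_le_leaves[of M] assms t by (metis less_SucE less_Suc_eq trans_less_add1 add_2_eq_Suc' order_le_less_trans)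
  ultimately show ?thesis using s t unfolding MSb_def HS_def by auto
qed

lemma finite_HS: "finite (HS N)"
proof (induction N)
  case 0 then show ?case by (simp add: HS_def)
next
  case (Suc N)
  have "HS (Suc N) \<subseteq> insert leaf (Node ` MSb (HS N) (N+2))"
  proof
    fix t assume "t \<in> HS (Suc N)"
    then have t: "hierarchy t" "leaves t < Suc N" by (auto simp: HS_def)
    show "t \<in> insert leaf (Node ` MSb (HS N) (N+2))"
    proof (cases "leaves t = 1")
      case True then show ?thesis using hier_leaves1 t by auto
    next
      case False
      then have l2: "2 \<le> leaves t" using leaves_ge1[of t] by linarith
      show ?thesis using decomp[OF t l2] by blast
    qed
  qed
  moreover have "finite (MSb (HS N) (N+2))" using MSb_prod[OF Suc] by auto
  ultimately show ?case by (meson finite_imageI finite_insert finite_subset)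
qed

lemma sum_by_size:
  assumes "\<And>t. P t \<Longrightarrow> hierarchy t"
  shows "(\<Sum>t\<in>{t. P t \<and> leaves t < N}. g (leaves t)) = (\<Sum>n<N. real (card {t. P t \<and> leaves t = n}) * g n)"
proof -
  have fin: "finite {t. P t \<and> leaves t < N}"
    by (rule finite_subset[OF _ finite_HS[of N]]) (auto simp: HS_def assms)
  have "(\<Sum>t\<in>{t. P t \<and> leaves t < N}. g (leaves t)) = (\<Sum>n<N. \<Sum>t\<in>{x \<in> {t. P t \<and> leaves t < N}. leaves x = n}. g (leaves t))"
    by (rule sum.group[symmetric]) (use fin in auto)
  also have "\<dots> = (\<Sum>n<N. real (card {t. P t \<and> leaves t = n}) * g n)"
  proof (rule sum.cong, simp)
    fix n assume "n \<in> {..<N}"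
    then have "{x \<in> {t. P t \<and> leaves t < N}. leaves x = n} = {t. P t \<and> leaves t = n}" by auto
    then show "(\<Sum>t\<in>{x \<in> {t. P t \<and> leaves t < N}. leaves x = n}. g (leaves t)) = real (card {t. P t \<and> leaves t = n}) * g n"
      by simp
  qed
  finally show ?thesis .
qed

definition rr :: "real \<Rightarrow> real" where "rr z = - ln (1 - z) - z"

lemma rr_nonneg: "0 \<le> z \<Longrightarrow> z < 1 \<Longrightarrow> 0 \<le> rr z"
  unfolding rr_def using ln_le_minus_one[of "1 - z"] by simp

lemma exp_rr: "z < 1 \<Longrightarrow> exp (z + rr z) = 1 / (1 - z)"
  unfolding rr_def by (simp add: exp_minus inverse_eq_divide)

lemma geom_le: "0 \<le> (z::real) \<Longrightarrow> z < 1 \<Longrightarrow> (\<Sum>j<J. z ^ j) \<le> 1 / (1 - z)"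
proof -
  assume z: "0 \<le> z" "z < 1"
  have "(\<Sum>j<J. z ^ j) = (1 - z ^ J) / (1 - z)" using z sum_gp_strict[of z J] by auto
  also have "\<dots> \<le> 1 / (1 - z)" using z by (intro divide_right_mono) auto
  finally show ?thesis .
qed

lemma MS_split:
  assumes "finite S" "J \<ge> 2"
  shows "sum (wt y) (MSb S J) = 1 + (\<Sum>t\<in>S. y ^ leaves t) + sum (wt y) {M \<in> MSb S J. 2 \<le> size M}"
proof -
  have fin: "finite (MSb S J)" using MSb_prod[OF assms(1)] assms(2) by auto
  have eq: "MSb S J = insert {#} ((\<lambda>t. {#t#}) ` S \<union> {M \<in> MSb S J. 2 \<le> size M})"
  proof (intro equalityI subsetI)
    fix M assume M: "M \<in> MSb S J"
    show "M \<in> insert {#} ((\<lambda>t. {#t#}) ` S \<union> {M \<in> MSb S J. 2 \<le> size M})"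
    proof (cases "size M")
      case (Suc k)
      show ?thesis
      proof (cases k)
        case 0
        then obtain t where "M = {#t#}" using Suc by (metis One_nat_def size_1_singleton_mset)
        then show ?thesis using M by (auto simp: MSb_def)
      qed (use M Suc in auto)
    qed simp
  next
    fix M assume "M \<in> insert {#} ((\<lambda>t. {#t#}) ` S \<union> {M \<in> MSb S J. 2 \<le> size M})"
    then show "M \<in> MSb S J" using assms(2) by (auto simp: MSb_def)
  qed
  have fin2: "finite {M \<in> MSb S J. 2 \<le> size M}" using fin by auto
  have "sum (wt y) (MSb S J) = wt y {#} + sum (wt y) ((\<lambda>t. {#t#}) ` S \<union> {M \<in> MSb S J. 2 \<le> size M})"
    by (subst eq, rule sum.insert) (use assms(1) fin2 in auto)
  also have "\<dots> = wt y {#} + (sum (wt y) ((\<lambda>t. {#t#}) ` S) + sum (wt y) {M \<in> MSb S J. 2 \<le> size M})"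
    by (subst sum.union_disjoint) (use assms(1) fin2 in auto)
  also have "sum (wt y) ((\<lambda>t. {#t#}) ` S) = (\<Sum>t\<in>S. y ^ leaves t)"
    by (subst sum.reindex) (auto intro: inj_onI simp: wt_def)
  finally show ?thesis by (simp add: wt_def)
qed

lemma upper_MS:
  assumes "finite S" "J \<ge> 2" "0 \<le> y" "y < 1" "F \<subseteq> {M \<in> MSb S J. 2 \<le> size M}"
  shows "sum (wt y) F \<le> exp ((\<Sum>t\<in>S. y ^ leaves t) + (\<Sum>t\<in>S. rr (y ^ leaves t))) - 1 - (\<Sum>t\<in>S. y ^ leaves t)"
proof -
  have fin: "finite (MSb S J)" using MSb_prod[OF assms(1)] assms(2) by auto
  have zlt: "y ^ leaves t < 1" for t using assms leaves_ge1[of t] by (simp add: power_less_one_iff)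
  have "sum (wt y) F \<le> sum (wt y) {M \<in> MSb S J. 2 \<le> size M}"
    by (rule sum_mono2) (use fin assms in \<open>auto simp: wt_def\<close>)
  also have "\<dots> = sum (wt y) (MSb S J) - 1 - (\<Sum>t\<in>S. y ^ leaves t)"
    using MS_split[OF assms(1,2), of y] by simp
  also have "sum (wt y) (MSb S J) = (\<Prod>t\<in>S. \<Sum>j<J. (y ^ leaves t) ^ j)"
    using MSb_prod[OF assms(1)] assms(2) by auto
  also have "\<dots> \<le> (\<Prod>t\<in>S. 1 / (1 - y ^ leaves t))"
    by (rule prod_mono) (use assms zlt in \<open>auto intro: geom_le sum_nonneg\<close>)
  also have "\<dots> = (\<Prod>t\<in>S. exp (y ^ leaves t + rr (y ^ leaves t)))"
    using zlt by (simp add: exp_rr)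
  also have "\<dots> = exp ((\<Sum>t\<in>S. y ^ leaves t) + (\<Sum>t\<in>S. rr (y ^ leaves t)))"
    using assms(1) by (simp add: exp_sum flip: sum.distrib)
  finally show ?thesis by simp
qed


lemma sum_insert_le: "finite A \<Longrightarrow> 0 \<le> (f x::real) \<Longrightarrow> sum f (insert x A) \<le> f x + sum f A"
  by (cases "x \<in> A") (auto simp: insert_absorb)

lemma finite_P:
  assumes "\<And>t. P t \<Longrightarrow> hierarchy t"
  shows "finite {t. P t \<and> leaves t < N}"
  by (rule finite_subset[OF _ finite_HS[of N]]) (auto simp: HS_def assms)

lemma step_gen:
  assumes Ph: "\<And>t. P t \<Longrightarrow> hierarchy t"
    and Pc: "\<And>M x. P (Node M) \<Longrightarrow> x \<in># M \<Longrightarrow> P x"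
    and y: "0 < y" "y < 1"
    and E: "E \<subseteq> {M \<in> MSb {t. P t \<and> leaves t < N} (N+2). 2 \<le> size M \<and> \<not> P (Node M)}"
  shows "(\<Sum>t\<in>{t. P t \<and> leaves t < Suc N}. y ^ leaves t) \<le> y + exp ((\<Sum>t\<in>{t. P t \<and> leaves t < N}. y ^ leaves t) + (\<Sum>t\<in>{t. P t \<and> leaves t < N}. rr (y ^ leaves t))) - 1 - (\<Sum>t\<in>{t. P t \<and> leaves t < N}. y ^ leaves t) - sum (wt y) E"
proof -
  define S where "S = {t. P t \<and> leaves t < N}"
  have finS: "finite S" unfolding S_def by (rule finite_P[OF Ph])
  have finMS: "finite (MSb S (N+2))" using MSb_prod[OF finS] by auto
  define F where "F = {M \<in> MSb S (N+2). 2 \<le> size M \<and> P (Node M)}"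
  have finF: "finite F" "finite E" using finMS E unfolding F_def S_def by (auto intro: finite_subset)
  have disj: "F \<inter> E = {}" using E unfolding F_def by auto
  have "sum (wt y) (F \<union> E) \<le> exp ((\<Sum>t\<in>S. y ^ leaves t) + (\<Sum>t\<in>S. rr (y ^ leaves t))) - 1 - (\<Sum>t\<in>S. y ^ leaves t)"
    by (rule upper_MS[OF finS, where J="N+2"]) (use y E in \<open>auto simp: F_def S_def\<close>)
  then have main: "sum (wt y) F \<le> exp ((\<Sum>t\<in>S. y ^ leaves t) + (\<Sum>t\<in>S. rr (y ^ leaves t))) - 1 - (\<Sum>t\<in>S. y ^ leaves t) - sum (wt y) E"
    using sum.union_disjoint[OF finF disj, of "wt y"] by simp
  have sub: "{t. P t \<and> leaves t < Suc N} \<subseteq> insert leaf (Node ` F)"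
  proof
    fix t assume "t \<in> {t. P t \<and> leaves t < Suc N}"
    then have t: "P t" "hierarchy t" "leaves t < Suc N" using Ph by auto
    show "t \<in> insert leaf (Node ` F)"
    proof (cases "leaves t = 1")
      case True then show ?thesis using hier_leaves1 t by auto
    next
      case False
      then have l2: "2 \<le> leaves t" using leaves_ge1[of t] by linarith
      have d: "t = Node (children t)" "2 \<le> size (children t)" "children t \<in> MSb (HS N) (N+2)"
        using decomp[OF t(2,3) l2] by auto
      have "children t \<in> MSb S (N+2)"
        using d t(1) Pc[of "children t"] unfolding MSb_def S_def HS_def by auto
      then have "children t \<in> F" using d t(1) unfolding F_def by simp
      then show ?thesis using d(1) by blast
    qed
  qed
  have "(\<Sum>t\<in>{t. P t \<and> leaves t < Suc N}. y ^ leaves t) \<le> (\<Sum>t\<in>insert leaf (Node ` F). y ^ leaves t)"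
    by (rule sum_mono2[OF _ sub]) (use finF y in auto)
  also have "\<dots> \<le> y ^ leaves leaf + (\<Sum>t\<in>Node ` F. y ^ leaves t)"
    by (rule sum_insert_le) (use finF y in auto)
  also have "(\<Sum>t\<in>Node ` F. y ^ leaves t) = sum (wt y) F"
    by (subst sum.reindex[OF inj_Node]) (auto intro!: sum.cong simp: F_def wt_def)
  finally show ?thesis using main by (simp add: leaf_def S_def)
qed

lemma lower_prod:
  fixes y :: real
  assumes y: "0 < y" "y < 1" and J: "J \<ge> 2"
  shows "\<exists>K. (\<Prod>t\<in>HS N. \<Sum>j<J. (y ^ leaves t) ^ j) \<le> 1 + (\<Sum>t\<in>HS N. y ^ leaves t) + (\<Sum>t\<in>HS K. y ^ leaves t) - y"
proof -
  have finS: "finite (HS N)" by (rule finite_HS)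
  have finMS: "finite (MSb (HS N) J)" using MSb_prod[OF finS] J by auto
  define F where "F = {M \<in> MSb (HS N) J. 2 \<le> size M}"
  have finF: "finite F" using finMS unfolding F_def by auto
  define K where "K = Suc (Suc (sum leaves (Node ` F)))"
  have hier: "hierarchy (Node M)" if "M \<in> F" for M
    using that unfolding F_def MSb_def HS_def by (auto simp: hierarchy_Node)
  have "leaves t \<le> sum leaves (Node ` F)" if "t \<in> Node ` F" for t
    by (rule member_le_sum) (use that finF in auto)
  then have lt: "leaves (Node M) < K" if "M \<in> F" for M
    using that unfolding K_def by (metis image_eqI le_imp_less_Suc less_SucI)
  have sub: "insert leaf (Node ` F) \<subseteq> HS K"
    using hier lt unfolding HS_def by (auto simp: leaf_def hierarchy_Node K_def)
  have nl: "leaf \<notin> Node ` F" unfolding F_def leaf_def by auto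
  have "(\<Prod>t\<in>HS N. \<Sum>j<J. (y ^ leaves t) ^ j) = sum (wt y) (MSb (HS N) J)"
    using MSb_prod[OF finS] J by auto
  also have "\<dots> = 1 + (\<Sum>t\<in>HS N. y ^ leaves t) + sum (wt y) F"
    unfolding F_def by (rule MS_split[OF finS J])
  also have "sum (wt y) F = (\<Sum>t\<in>Node ` F. y ^ leaves t)"
    by (subst sum.reindex[OF inj_Node]) (auto intro!: sum.cong simp: F_def wt_def)
  also have "\<dots> = (\<Sum>t\<in>insert leaf (Node ` F). y ^ leaves t) - y"
    using nl finF by (simp add: leaf_def)
  also have "(\<Sum>t\<in>insert leaf (Node ` F). y ^ leaves t) \<le> (\<Sum>t\<in>HS K. y ^ leaves t)"
    by (rule sum_mono2[OF finite_HS sub]) (use y in auto)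
  finally have "(\<Prod>t\<in>HS N. \<Sum>j<J. (y ^ leaves t) ^ j) \<le> 1 + (\<Sum>t\<in>HS N. y ^ leaves t) + (\<Sum>t\<in>HS K. y ^ leaves t) - y"
    by simp
  then show ?thesis by blast
qed


lemma Hs_eq: "(\<Sum>t\<in>HS N. g (leaves t)) = (\<Sum>n<N. real (H n) * g n)"
  using sum_by_size[where P=hierarchy and N=N and g=g] unfolding HS_def H_def by simp

lemma As_eq: "(\<Sum>t\<in>{t. (hierarchy t \<and> \<not> contains_sub t T) \<and> leaves t < N}. g (leaves t)) = (\<Sum>n<N. real (H_avoid T n) * g n)"
proof -
  have "{t. (hierarchy t \<and> \<not> contains_sub t T) \<and> leaves t = n} = {t. hierarchy t \<and> leaves t = n \<and> \<not> contains_sub t T}" for n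
    by auto
  then show ?thesis using sum_by_size[where P="\<lambda>t. hierarchy t \<and> \<not> contains_sub t T" and N=N and g=g] unfolding H_avoid_def by simp
qed

lemma zpow_lt1: "0 \<le> (x::real) \<Longrightarrow> x < 1 \<Longrightarrow> x ^ leaves t < 1"
  using leaves_ge1[of t] by (simp add: power_less_one_iff)

lemma exp_mono_aux:
  fixes b w R :: real
  assumes "0 \<le> b" "b \<le> w" "0 \<le> R"
  shows "exp (b + R) - b \<le> exp (w + R) - w"
proof -
  have e1: "1 \<le> exp (b + R)" using assms by simp
  have "exp (w + R) = exp (b + R) * exp (w - b)" by (simp flip: exp_add)
  also have "\<dots> \<ge> exp (b + R) * (1 + (w - b))"
    by (rule mult_left_mono) (auto intro: exp_ge_add_one_self)
  finally have "exp (b + R) + exp (b + R) * (w - b) \<le> exp (w + R)" by (simp add: algebra_simps)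
  moreover have "(w - b) \<le> exp (b + R) * (w - b)" using mult_right_mono[OF e1, of "w - b"] assms
    by simp
  ultimately show ?thesis by linarith
qed

lemma iter_gen:
  fixes f :: "nat \<Rightarrow> real"
  assumes st: "\<And>N. N \<ge> Nst \<Longrightarrow> f (Suc N) \<le> y - d + exp (f N + Rb) - 1 - f N"
    and ba: "f Nst \<le> ln 2 - Rb" and cc: "y - d + 2 * Rb \<le> 2 * ln 2 - 1"
    and nn: "\<And>N. 0 \<le> f N" and Rb: "0 \<le> Rb"
    and N: "N \<ge> Nst"
  shows "f N \<le> ln 2 - Rb"
  using N
proof (induction rule: dec_induct)
  case base then show ?case by (rule ba)
next
  case (step n)
  have "f (Suc n) \<le> y - d + exp (f n + Rb) - 1 - f n" using st step(1) .
  moreover have "exp (f n + Rb) - f n \<le> exp ((ln 2 - Rb) + Rb) - (ln 2 - Rb)"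
    by (rule exp_mono_aux) (use nn step Rb in auto)
  moreover have "exp ((ln 2 - Rb) + Rb) = 2" by simp
  ultimately show ?case using cc by linarith
qed

lemma H_side0:
  assumes x: "0 < x" "x < 1" and sm: "summable (\<lambda>n. real (H n) * x^n)"
  shows "x + 2 * (\<Sum>t\<in>HS N. rr (x ^ leaves t)) \<le> 2 * ln 2 - 1 + 2 * (suminf (\<lambda>n. real (H n) * x^n) - (\<Sum>t\<in>HS N. x ^ leaves t))"
proof -
  define Hx where "Hx = suminf (\<lambda>n. real (H n) * x^n)"
  have part: "(\<Sum>t\<in>HS K. x ^ leaves t) \<le> Hx" for K
  proof -
    have "(\<Sum>t\<in>HS K. x ^ leaves t) = (\<Sum>n<K. real (H n) * x^n)" by (rule Hs_eq)
    also have "\<dots> \<le> Hx" unfolding Hx_def by (rule sum_le_suminf[OF sm]) (use x in auto)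
    finally show ?thesis .
  qed
  define W where "W = (\<Sum>t\<in>HS N. x ^ leaves t)"
  define R where "R = (\<Sum>t\<in>HS N. rr (x ^ leaves t))"
  have zlt: "x ^ leaves t < 1" for t using x by (intro zpow_lt1) auto
  have bnd: "(\<Prod>t\<in>HS N. \<Sum>j<J. (x ^ leaves t) ^ j) \<le> 1 + 2 * Hx - x" if J2: "J \<ge> 2" for J
  proof -
    obtain K where "(\<Prod>t\<in>HS N. \<Sum>j<J. (x ^ leaves t) ^ j) \<le> 1 + W + (\<Sum>t\<in>HS K. x ^ leaves t) - x"
      using lower_prod[OF x J2, of N] unfolding W_def by blast
    then show ?thesis using part[of K] part[of N] unfolding W_def by linarith
  qed
  have lim: "(\<lambda>J. \<Prod>t\<in>HS N. \<Sum>j<J. (x ^ leaves t) ^ j) \<longlonglongrightarrow> (\<Prod>t\<in>HS N. 1 / (1 - x ^ leaves t))"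
  proof (rule tendsto_prod)
    fix t assume "t \<in> HS N"
    have "norm (x ^ leaves t) < 1" using zlt[of t] x by simp
    then show "(\<lambda>J. \<Sum>j<J. (x ^ leaves t) ^ j) \<longlonglongrightarrow> 1 / (1 - x ^ leaves t)"
      using geometric_sums sums_def by blast
  qed
  have P1: "(\<Prod>t\<in>HS N. 1 / (1 - x ^ leaves t)) \<le> 1 + 2 * Hx - x"
    by (rule LIMSEQ_le_const2[OF lim]) (use bnd in auto)
  have P2: "(\<Prod>t\<in>HS N. 1 / (1 - x ^ leaves t)) = exp (W + R)"
  proof -
    have "(\<Prod>t\<in>HS N. 1 / (1 - x ^ leaves t)) = (\<Prod>t\<in>HS N. exp (x ^ leaves t + rr (x ^ leaves t)))"
    using zlt by (simp add: exp_rr)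
    also have "\<dots> = exp (W + R)"
      unfolding W_def R_def using finite_HS by (simp add: exp_sum flip: sum.distrib)
    finally show ?thesis .
  qed
  have E: "exp (W + R) \<le> 1 + 2 * Hx - x" using P1 P2 by simp
  have "2 * (1 + (W + R) - ln 2) \<le> exp (W + R)"
  proof -
    have "1 + (W + R - ln 2) \<le> exp (W + R - ln 2)" by (rule exp_ge_add_one_self)
    also have "exp (W + R - ln 2) = exp (W + R) / 2" by (simp add: exp_diff)
    finally show ?thesis by simp
  qed
  then show ?thesis using E unfolding Hx_def[symmetric] R_def[symmetric] W_def[symmetric] by (smt (verit))
qed

lemma H_side:
  assumes x: "0 < x" "x < 1" and sm: "summable (\<lambda>n. real (H n) * x^n)"
  shows "x + 2 * (\<Sum>t\<in>HS N. rr (x ^ leaves t)) \<le> 2 * ln 2 - 1"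
proof -
  define Hx where "Hx = suminf (\<lambda>n. real (H n) * x^n)"
  have mono: "(\<Sum>t\<in>HS N. rr (x ^ leaves t)) \<le> (\<Sum>t\<in>HS N'. rr (x ^ leaves t))" if "N \<le> N'" for N'
    by (rule sum_mono2[OF finite_HS]) (use that x in \<open>auto simp: HS_def intro!: rr_nonneg zpow_lt1\<close>)
  have "(\<lambda>N'. (\<Sum>n<N'. real (H n) * x^n)) \<longlonglongrightarrow> Hx"
    unfolding Hx_def by (rule summable_LIMSEQ[OF sm])
  then have "(\<lambda>N'. (\<Sum>t\<in>HS N'. x ^ leaves t)) \<longlonglongrightarrow> Hx" by (simp add: Hs_eq)
  then have lim: "(\<lambda>N'. 2 * ln 2 - 1 + 2 * (Hx - (\<Sum>t\<in>HS N'. x ^ leaves t))) \<longlonglongrightarrow> 2 * ln 2 - 1 + 2 * (Hx - Hx)"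
    by (intro tendsto_intros)
  then have lim2: "(\<lambda>N'. 2 * ln 2 - 1 + 2 * (Hx - (\<Sum>t\<in>HS N'. x ^ leaves t))) \<longlonglongrightarrow> 2 * ln 2 - 1"
    by simp
  have "\<exists>Nst. \<forall>N'\<ge>Nst. x + 2 * (\<Sum>t\<in>HS N. rr (x ^ leaves t)) \<le> 2 * ln 2 - 1 + 2 * (Hx - (\<Sum>t\<in>HS N'. x ^ leaves t))"
  proof (intro exI allI impI)
    fix N' assume "N \<le> N'"
    then show "x + 2 * (\<Sum>t\<in>HS N. rr (x ^ leaves t)) \<le> 2 * ln 2 - 1 + 2 * (Hx - (\<Sum>t\<in>HS N'. x ^ leaves t))"
      using H_side0[OF x sm, of N'] mono[of N'] unfolding Hx_def by linarith
  qed
  then show ?thesis by (rule LIMSEQ_le_const[OF lim2])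
qed

lemma rr_diff:
  assumes "0 \<le> a" "a \<le> b" "b \<le> 1/2"
  shows "rr b \<le> rr a + 2 * ((b - a) * b)"
proof -
  have "ln (1 - a) - ln (1 - b) = ln ((1 - a) / (1 - b))" using assms by (simp add: ln_div)
  also have "(1 - a) / (1 - b) = 1 + (b - a) / (1 - b)" using assms by (simp add: field_simps)
  also have "ln \<dots> \<le> (b - a) / (1 - b)" by (rule ln_add_one_self_le_self) (use assms in auto)
  finally have l: "ln (1 - a) - ln (1 - b) \<le> (b - a) / (1 - b)" .
  have "(b - a) / (1 - b) - (b - a) = (b - a) * b / (1 - b)" using assms by (simp add: field_simps)
  also have "\<dots> \<le> (b - a) * b / (1/2)" by (rule divide_left_mono) (use assms in auto)
  finally have "(b - a) / (1 - b) - (b - a) \<le> 2 * ((b - a) * b)" by simp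
  then show ?thesis using l unfolding rr_def by linarith
qed

lemma ln2_bounds: "1/2 < ln (2::real)" "ln (2::real) < 3/4"
proof -
  have "exp (1/2::real) \<le> 1 + 1/2 + (1/2)\<^sup>2" by (rule exp_bound) auto
  then have e1: "exp (1/2::real) < 2" by (simp add: power2_eq_square)
  have "ln (exp (1/2::real)) < ln 2" using e1 by (subst ln_less_cancel_iff) auto
  then show "1/2 < ln (2::real)" by simp
  have "1 + 3/4 + (3/4)\<^sup>2 / 2 \<le> exp (3/4::real)" by (rule exp_lower_Taylor_quadratic) auto
  then have e2: "2 < exp (3/4::real)" by (simp add: power2_eq_square)
  have "ln 2 < ln (exp (3/4::real))" using e2 by (subst ln_less_cancel_iff) auto
  then show "ln (2::real) < 3/4" by simp
qed




lemma rr_tendsto: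
  assumes "(f \<longlongrightarrow> q) F" "0 \<le> q" "q < (1::real)"
  shows "((\<lambda>x. rr (f x ^ n)) \<longlongrightarrow> rr (q ^ n)) F"
proof (cases "n = 0")
  case True then show ?thesis by simp
next
  case False
  then have "q ^ n < 1" using assms by (simp add: power_less_one_iff)
  then show ?thesis unfolding rr_def by (intro tendsto_intros assms) auto
qed

lemma H0: "H 0 = 0"
  unfolding H_def using leaves_ge1 by (metis (mono_tags, lifting) Collect_empty_eq card.empty not_one_le_zero)


lemma ar20: "S \<le> 1/20 + E1 - 1 - W \<Longrightarrow> E1 \<le> E2 \<Longrightarrow> E2 - W \<le> E3 - 1/10 \<Longrightarrow> E3 \<le> 11221/10000 \<Longrightarrow> S \<le> (1/10::real)"
  by linarith
lemma ar1: "S \<le> a + E1 - 1 - W \<Longrightarrow> E1 \<le> E2 \<Longrightarrow> S \<le> a - 0 + E2 - 1 - (W::real)"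
  by linarith
lemma ar2: "S \<le> a + E1 - 1 - W - D \<Longrightarrow> E1 \<le> E2 \<Longrightarrow> S \<le> a - D + E2 - 1 - (W::real)"
  by linarith
lemma ar3: "A \<le> l - r \<Longrightarrow> B \<le> r \<Longrightarrow> A + B \<le> (l::real)"
  by linarith
lemma arRp_c: "Rp \<le> (c - p)/2 \<Longrightarrow> p + 2 * Rp \<le> (c::real)"
  by (simp add: field_simps)
lemma arRp_Hm: "S1 = S0 + hm * pm \<Longrightarrow> pm \<le> hm * pm \<Longrightarrow> S1 + Rp \<le> l \<Longrightarrow> S0 + Rp \<le> l - (pm::real)"
  by linarith
lemma arRy: "A \<le> B + 2 * C \<Longrightarrow> B \<le> Rp \<Longrightarrow> C \<le> D \<Longrightarrow> D = G1 - G0 \<Longrightarrow> G1 < G0 + eps \<Longrightarrow> Rb = Rp + 2 * eps \<Longrightarrow> A \<le> (Rb::real)"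
  by linarith
lemma arBase: "0 \<le> pm \<Longrightarrow> F \<le> Sy \<Longrightarrow> Sy < Sp + pm/2 \<Longrightarrow> Sp + Rp \<le> l - pm \<Longrightarrow> Rb = Rp + 2*eps \<Longrightarrow> eps = pm/8 \<Longrightarrow> F \<le> l - (Rb::real)"
  by (simp add: field_simps)
lemma arCC: "pm \<le> ym \<Longrightarrow> y < p + pm/2 \<Longrightarrow> p + 2*Rp \<le> c \<Longrightarrow> Rb = Rp + 2*eps \<Longrightarrow> eps = pm/8 \<Longrightarrow> c = 2*l - 1 \<Longrightarrow> y - ym + 2*Rb \<le> 2*l - (1::real)"
  by (simp add: field_simps)
lemma arSwap: "A + B \<le> (l::real) \<Longrightarrow> B \<le> l - A"
  by (simp add: field_simps)
lemma arQ: "A = Y * Y \<Longrightarrow> B = P * P \<Longrightarrow> P * P \<le> P * Y \<Longrightarrow> (Y - P) * Y \<le> A - (B::real)"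
  by (simp add: algebra_simps)
lemma arR: "r \<le> a + 2 * u \<Longrightarrow> u \<le> v \<Longrightarrow> r \<le> a + 2 * (v::real)"
  by linarith
lemma arFin: "F \<le> G \<Longrightarrow> G \<le> l - R \<Longrightarrow> 0 \<le> R \<Longrightarrow> F = S \<Longrightarrow> S \<le> (l::real)"
  by linarith
lemma arSide: "x + 2 * S \<le> c \<Longrightarrow> S \<le> (c - x) / (2::real)"
  by (simp add: field_simps)

lemma main_thm:
  fixes T :: tree and m :: nat
  assumes m2: "m \<ge> 2" and hT: "hierarchy T" and lT: "leaves T = m"
  shows "conv_radius (\<lambda>n. real (H n)) < conv_radius (\<lambda>n. real (H_avoid T n))"
proof -
  define h where "h = (\<lambda>n. real (H n))"
  define a where "a = (\<lambda>n. real (H_avoid T n))"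
  define c where "c = 2 * ln 2 - (1::real)"
  have c_lt: "c < 1/2" and c_pos: "0 < c" using ln2_bounds unfolding c_def by auto
  have h_nn: "0 \<le> h n" for n unfolding h_def by simp
  have a_nn: "0 \<le> a n" for n unfolding a_def by simp
  have h0: "h 0 = 0" unfolding h_def by (simp add: H0)
  have Ph: "\<And>t. hierarchy t \<Longrightarrow> hierarchy t" by simp
  have Pc: "\<And>M x. hierarchy (Node M) \<Longrightarrow> x \<in># M \<Longrightarrow> hierarchy x" by (simp add: hierarchy_Node)
  have Hs_h: "(\<Sum>t\<in>HS N. g (leaves t)) = (\<Sum>n<N. h n * g n)" for N g
    unfolding h_def by (rule Hs_eq)

  have W20: "(\<Sum>t\<in>HS N. (1/20::real) ^ leaves t) \<le> 1/10" for N
  proof (induction N)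
    case 0 then show ?case by (simp add: HS_def)
  next
    case (Suc N)
    define W where "W = (\<Sum>t\<in>HS N. (1/20::real) ^ leaves t)"
    define R where "R = (\<Sum>t\<in>HS N. rr ((1/20::real) ^ leaves t))"
    have W0: "0 \<le> W" unfolding W_def by (auto intro: sum_nonneg)
    have "R \<le> (\<Sum>t\<in>HS N. (1/10) * (1/20::real) ^ leaves t)"
      unfolding R_def
    proof (rule sum_mono)
      fix t
      define z where "z = (1/20::real) ^ leaves t"
      have z0: "0 \<le> z" unfolding z_def by simp
      have z1: "z \<le> 1/20" unfolding z_def using power_decreasing[OF leaves_ge1[of t], of "1/20::real"] by simp
      have "rr z \<le> 2 * z^2" using ln_one_minus_pos_lower_bound[of z] z0 z1 unfolding rr_def by simp
      also have "2 * z^2 = (2 * z) * z" by (simp add: power2_eq_square)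
      also have "\<dots> \<le> (1/10) * z" by (rule mult_right_mono) (use z0 z1 in auto)
      finally show "rr ((1/20) ^ leaves t) \<le> (1/10) * (1/20) ^ leaves t" unfolding z_def .
    qed
    also have "\<dots> = (1/10) * W" unfolding W_def by (simp add: sum_distrib_left)
    finally have R1: "R \<le> 1/100" using Suc.IH unfolding W_def by linarith
    have st: "(\<Sum>t\<in>HS (Suc N). (1/20::real) ^ leaves t) \<le> 1/20 + exp (W + R) - 1 - W"
      using step_gen[where P=hierarchy and y="1/20" and E="{}" and N=N, OF Ph Pc] unfolding W_def R_def HS_def by simp
    have ex1: "exp (W + R) \<le> exp (W + 1/100)" using R1 by simp
    have "exp (W + 1/100) - W \<le> exp (1/10 + 1/100) - 1/10"
      by (rule exp_mono_aux) (use W0 Suc.IH W_def in auto)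
    then have ex2: "exp (W + 1/100) - W \<le> exp (11/100) - 1/10" by simp
    have "exp (11/100::real) \<le> 1 + 11/100 + (11/100)\<^sup>2" using exp_bound[of "11/100"] by simp
    then have ex3: "exp (11/100::real) \<le> 11221/10000" by (simp add: power2_eq_square)
    show ?case by (rule ar20[OF st ex1 ex2 ex3])
  qed
  have sm20: "summable (\<lambda>n. h n * (1/20)^n)"
  proof (rule summableI_nonneg_bounded[where x="1/10"])
    fix n show "0 \<le> h n * (1/20) ^ n" using h_nn by simp
    show "(\<Sum>i<n. h i * (1/20) ^ i) \<le> 1/10" using W20[of n] Hs_h[where N=n and g="\<lambda>k. (1/20::real)^k"] by simp
  qed
  have rho_ge: "ereal (1/20) \<le> conv_radius h" using conv_radius_geI[OF sm20] by simp

  have side: "x + 2 * (\<Sum>n<N. h n * rr (x ^ n)) \<le> c" if "0 < x" "x < 1" "ereal x < conv_radius h" for x N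
  proof -
    have "summable (\<lambda>n. real (H n) * x ^ n)" using summable_in_conv_radius[of x h] that unfolding h_def by simp
    from H_side[OF that(1,2) this, of N] show ?thesis unfolding c_def using Hs_h[where N=N and g="\<lambda>k. rr (x^k)"] by simp
  qed
  have rho_le: "conv_radius h \<le> ereal c"
  proof (rule ccontr)
    assume "\<not> conv_radius h \<le> ereal c"
    then have "ereal c < min (conv_radius h) (ereal (1/2))" using c_lt by auto
    then obtain x where x: "ereal c < ereal x" "ereal x < min (conv_radius h) (ereal (1/2))"
      using ereal_dense2 by blast
    have "x + 2 * (\<Sum>n<0. h n * rr (x ^ n)) \<le> c" by (rule side) (use x c_pos in auto)
    then show False using x by simp
  qed
  obtain p where p: "conv_radius h = ereal p" using rho_le rho_ge by (cases "conv_radius h") auto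
  have p0: "1/20 \<le> p" "p \<le> c" using rho_le rho_ge p by auto
  have pp: "0 < p" "p < 1/2" "p < 1" using p0 c_lt by auto

  have below: "(\<Sum>n<N. h n * x^n) + (\<Sum>n<M. h n * rr (x^n)) \<le> ln 2 \<and> x + 2 * (\<Sum>n<M. h n * rr (x^n)) \<le> c"
    if x: "0 < x" "x < p" for x N M
  proof -
    have x1: "x < 1" using x pp by auto
    have xr: "ereal x < conv_radius h" using x p by simp
    have sideN: "x + 2 * (\<Sum>n<M. h n * rr (x^n)) \<le> c" for M by (rule side[OF x(1) x1 xr])
    have rnn: "0 \<le> h n * rr (x^n)" for n
      using h_nn[of n] rr_nonneg[of "x^n"] x x1 h0 by (cases "n = 0") (auto simp: power_less_one_iff)
    have sRx: "summable (\<lambda>n. h n * rr (x^n))"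
    proof (rule summableI_nonneg_bounded[where x="(c - x)/2"])
      fix n show "0 \<le> h n * rr (x^n)" by (rule rnn)
      show "(\<Sum>i<n. h i * rr (x^i)) \<le> (c - x)/2" by (rule arSide[OF sideN[of n]])
    qed
    define Rx where "Rx = suminf (\<lambda>n. h n * rr (x^n))"
    have part: "(\<Sum>n<M. h n * rr (x^n)) \<le> Rx" for M
      unfolding Rx_def by (rule sum_le_suminf[OF sRx]) (use rnn in auto)
    have Rx_le: "Rx \<le> (c - x)/2" unfolding Rx_def by (rule suminf_le_const[OF sRx], rule arSide[OF sideN])
    have Rx0: "0 \<le> Rx" unfolding Rx_def by (rule suminf_nonneg[OF sRx rnn])
    define fH where "fH = (\<lambda>N. \<Sum>t\<in>HS N. x ^ leaves t)"
    have iter0: "fH N \<le> ln 2 - Rx"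
    proof (rule iter_gen[where Nst=0 and d=0 and y=x and Rb=Rx and f=fH])
      fix N :: nat
      define W where "W = (\<Sum>t\<in>HS N. x ^ leaves t)"
      define R where "R = (\<Sum>t\<in>HS N. rr (x ^ leaves t))"
      have "R \<le> Rx" using part[of N] Hs_h[where N=N and g="\<lambda>k. rr (x^k)"] unfolding R_def by simp
      then have ex: "exp (W + R) \<le> exp (W + Rx)" by simp
      have st: "fH (Suc N) \<le> x + exp (W + R) - 1 - W"
        using step_gen[where P=hierarchy and y=x and E="{}" and N=N, OF Ph Pc x(1) x1] unfolding W_def R_def HS_def fH_def by simp
      have "fH (Suc N) \<le> x - 0 + exp (W + Rx) - 1 - W" by (rule ar1[OF st ex])
      then show "fH (Suc N) \<le> x - 0 + exp (fH N + Rx) - 1 - fH N"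
        unfolding W_def fH_def .
    next
      show "fH 0 \<le> ln 2 - Rx" using Rx_le x c_lt ln2_bounds by (simp add: HS_def fH_def)
    next
      show "x - 0 + 2 * Rx \<le> 2 * ln 2 - 1" using Rx_le unfolding c_def by simp
    next
      fix N show "0 \<le> fH N" using x unfolding fH_def by (auto intro: sum_nonneg)
    qed (use Rx0 in auto)
    then have iter: "(\<Sum>t\<in>HS N. x ^ leaves t) \<le> ln 2 - Rx" unfolding fH_def .
    have "(\<Sum>n<N. h n * x^n) \<le> ln 2 - Rx" using iter Hs_h[where N=N and g="\<lambda>k. x^k"] by simp
    from ar3[OF this part[of M]] sideN[of M] show ?thesis by blast
  qed

  have atp: "(\<Sum>n<N. h n * p^n) + (\<Sum>n<M. h n * rr (p^n)) \<le> ln 2" for N M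
  proof (rule tendsto_le[OF trivial_limit_at_left_real])
    show "((\<lambda>x. ln 2) \<longlongrightarrow> ln 2) (at_left p)" by simp
    show "((\<lambda>x. (\<Sum>n<N. h n * x^n) + (\<Sum>n<M. h n * rr (x^n))) \<longlongrightarrow> (\<Sum>n<N. h n * p^n) + (\<Sum>n<M. h n * rr (p^n))) (at_left p)"
      by (intro tendsto_intros rr_tendsto tendsto_ident_at) (use pp in auto)
    show "\<forall>\<^sub>F x in at_left p. (\<Sum>n<N. h n * x^n) + (\<Sum>n<M. h n * rr (x^n)) \<le> ln 2"
      using eventually_at_left_real[OF pp(1)] by eventually_elim (use below in auto)
  qed
  have atp2: "p + 2 * (\<Sum>n<M. h n * rr (p^n)) \<le> c" for M
  proof (rule tendsto_le[OF trivial_limit_at_left_real])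
    show "((\<lambda>x. c) \<longlongrightarrow> c) (at_left p)" by simp
    show "((\<lambda>x. x + 2 * (\<Sum>n<M. h n * rr (x^n))) \<longlongrightarrow> p + 2 * (\<Sum>n<M. h n * rr (p^n))) (at_left p)"
      by (intro tendsto_intros rr_tendsto tendsto_ident_at) (use pp in auto)
    show "\<forall>\<^sub>F x in at_left p. x + 2 * (\<Sum>n<M. h n * rr (x^n)) \<le> c"
      using eventually_at_left_real[OF pp(1)] by eventually_elim (use below in auto)
  qed
  have rpn: "0 \<le> h n * rr (p^n)" for n
    using h_nn[of n] rr_nonneg[of "p^n"] pp h0 by (cases "n = 0") (auto simp: power_less_one_iff)
  have sRp: "summable (\<lambda>n. h n * rr (p^n))"
  proof (rule summableI_nonneg_bounded[where x="(c - p)/2"])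
    fix n show "0 \<le> h n * rr (p^n)" by (rule rpn)
    show "(\<Sum>i<n. h i * rr (p^i)) \<le> (c - p)/2" by (rule arSide[OF atp2[of n]])
  qed
  define Rp where "Rp = suminf (\<lambda>n. h n * rr (p^n))"
  have Rp0: "0 \<le> Rp" unfolding Rp_def by (rule suminf_nonneg[OF sRp rpn])
  have Rp_c: "p + 2 * Rp \<le> c"
  proof -
    have "Rp \<le> (c - p)/2" unfolding Rp_def by (rule suminf_le_const[OF sRp], rule arSide[OF atp2])
    then show ?thesis by (rule arRp_c)
  qed
  have Rp_H: "(\<Sum>n<N. h n * p^n) + Rp \<le> ln 2" for N
  proof -
    have "Rp \<le> ln 2 - (\<Sum>n<N. h n * p^n)" unfolding Rp_def by (rule suminf_le_const[OF sRp], rule arSwap[OF atp])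
    then show ?thesis by simp
  qed
  have hm: "1 \<le> h m"
  proof -
    have "finite {t. hierarchy t \<and> leaves t = m}"
      by (rule finite_subset[OF _ finite_HS[of "Suc m"]]) (auto simp: HS_def)
    moreover have "T \<in> {t. hierarchy t \<and> leaves t = m}" using hT lT by simp
    ultimately have "0 < H m" unfolding H_def by (metis card_gt_0_iff empty_iff)
    then show ?thesis unfolding h_def by simp
  qed
  have pm0: "0 < p^m" using pp by simp
  have Rp_Hm: "(\<Sum>n<m. h n * p^n) + Rp \<le> ln 2 - p^m"
  proof -
    have "(\<Sum>n<Suc m. h n * p^n) = (\<Sum>n<m. h n * p^n) + h m * p^m" by simp
    moreover have "p^m \<le> h m * p^m" using hm pm0 by simp
    ultimately show ?thesis by (rule arRp_Hm[OF _ _ Rp_H[of "Suc m"]])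
  qed

  define K0 where "K0 = (p^2 + p)/2"
  have pp2: "p^2 < p" using pp by (simp add: power2_eq_square)
  have K0: "p^2 < K0" "K0 < p" "0 < K0" using pp2 pp unfolding K0_def by (auto simp: add_pos_nonneg)
  have smK: "summable (\<lambda>n. h n * K0^n)" by (rule summable_in_conv_radius) (use K0 p in auto)
  define G where "G = (\<lambda>z. suminf (\<lambda>n. h n * z^n))"
  have Gc: "isCont G (p^2)" unfolding G_def by (rule isCont_powser[OF smK]) (use K0 in auto)
  define eps where "eps = p^m / 8"
  have eps0: "0 < eps" unfolding eps_def using pm0 by simp
  have t1: "((\<lambda>y. y^2) \<longlongrightarrow> p^2) (at_right p)" by (intro tendsto_intros)
  have t2: "((\<lambda>y. G (y^2)) \<longlongrightarrow> G (p^2)) (at_right p)" by (rule isCont_tendsto_compose[OF Gc t1])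
  have t3: "((\<lambda>y. \<Sum>n<m. h n * y^n) \<longlongrightarrow> (\<Sum>n<m. h n * p^n)) (at_right p)" by (intro tendsto_intros)
  have t4: "((\<lambda>y. y) \<longlongrightarrow> p) (at_right p)" by (rule tendsto_ident_at)
  have e1: "\<forall>\<^sub>F y in at_right p. y \<in> {p<..<1/2}" using eventually_at_right_real[OF pp(2)] by blast
  have e2: "\<forall>\<^sub>F y in at_right p. y^2 < K0" by (rule order_tendstoD(2)[OF t1 K0(1)])
  have e3: "\<forall>\<^sub>F y in at_right p. G (y^2) < G (p^2) + eps" by (rule order_tendstoD(2)[OF t2]) (use eps0 in simp)
  have e4: "\<forall>\<^sub>F y in at_right p. y < p + p^m/2" by (rule order_tendstoD(2)[OF t4]) (use pm0 in simp)
  have e5: "\<forall>\<^sub>F y in at_right p. (\<Sum>n<m. h n * y^n) < (\<Sum>n<m. h n * p^n) + p^m/2"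
    by (rule order_tendstoD(2)[OF t3]) (use pm0 in simp)
  have "\<forall>\<^sub>F y in at_right p. y \<in> {p<..<1/2} \<and> y^2 < K0 \<and> G (y^2) < G (p^2) + eps \<and> y < p + p^m/2 \<and> (\<Sum>n<m. h n * y^n) < (\<Sum>n<m. h n * p^n) + p^m/2"
    using e1 e2 e3 e4 e5 by eventually_elim auto
  moreover have "at_right p \<noteq> (bot :: real filter)" by simp
  ultimately obtain y where y: "p < y" "y < 1/2" "y^2 < K0" "G (y^2) < G (p^2) + eps" "y < p + p^m/2"
    "(\<Sum>n<m. h n * y^n) < (\<Sum>n<m. h n * p^n) + p^m/2"
    using eventually_happens' by (metis (no_types, lifting) greaterThanLessThan_iff)
  have y0: "0 < y" "y < 1" using y pp by auto

  define Rb where "Rb = Rp + 2 * eps"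
  have Rb0: "0 \<le> Rb" unfolding Rb_def using Rp0 eps0 by simp
  have smy2: "summable (\<lambda>n. h n * (y^2)^n)" by (rule summable_in_conv_radius) (use y K0 p in auto)
  have smp2: "summable (\<lambda>n. h n * (p^2)^n)" by (rule summable_in_conv_radius) (use pp2 pp p in auto)
  have Ry: "(\<Sum>n<N. h n * rr (y^n)) \<le> Rb" for N
  proof -
    have trm: "h n * rr (y^n) \<le> h n * rr (p^n) + 2 * (h n * (y^2)^n - h n * (p^2)^n)" for n
    proof (cases "n = 0")
      case True then show ?thesis using h0 by simp
    next
      case False
      have yn: "y^n \<le> y" using power_decreasing[of 1 n y] False y0 by simp
      have pyn: "p^n \<le> y^n" using pp y by (simp add: power_mono)
      have r1: "rr (y^n) \<le> rr (p^n) + 2 * ((y^n - p^n) * y^n)"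
        by (rule rr_diff) (use pp pyn yn y in auto)
      have q1: "(y^2)^n = y^n * y^n" by (simp add: power2_eq_square power_mult_distrib)
      have q2: "(p^2)^n = p^n * p^n" by (simp add: power2_eq_square power_mult_distrib)
      have q3: "p^n * p^n \<le> p^n * y^n" using pyn pp by (simp add: mult_left_mono)
      have r2: "(y^n - p^n) * y^n \<le> (y^2)^n - (p^2)^n" by (rule arQ[OF q1 q2 q3])
      have r3: "rr (y^n) \<le> rr (p^n) + 2 * ((y^2)^n - (p^2)^n)" by (rule arR[OF r1 r2])
      have "h n * rr (y^n) \<le> h n * (rr (p^n) + 2 * ((y^2)^n - (p^2)^n))"
        by (rule mult_left_mono[OF r3 h_nn])
      then show ?thesis by (simp add: algebra_simps)
    qed
    have tnn: "0 \<le> h n * (y^2)^n - h n * (p^2)^n" for n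
    proof -
      have "p * p \<le> y * y" using y pp by (intro mult_mono) auto
      then have "p^2 \<le> y^2" by (simp add: power2_eq_square)
      then have "(p^2)^n \<le> (y^2)^n" by (rule power_mono) simp
      then show ?thesis using h_nn[of n] by (simp add: mult_left_mono)
    qed
    have B1: "(\<Sum>n<N. h n * rr (y^n)) \<le> (\<Sum>n<N. h n * rr (p^n)) + 2 * (\<Sum>n<N. h n * (y^2)^n - h n * (p^2)^n)"
      using sum_mono[of "{..<N}", OF trm] by (simp add: sum.distrib sum_distrib_left)
    have B2: "(\<Sum>n<N. h n * rr (p^n)) \<le> Rp" unfolding Rp_def by (rule sum_le_suminf[OF sRp]) (use rpn in auto)
    have C1: "(\<Sum>n<N. h n * (y^2)^n - h n * (p^2)^n) \<le> (\<Sum>n. h n * (y^2)^n - h n * (p^2)^n)"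
      by (rule sum_le_suminf) (use summable_diff[OF smy2 smp2] tnn in auto)
    have D1: "(\<Sum>n. h n * (y^2)^n - h n * (p^2)^n) = G (y^2) - G (p^2)" unfolding G_def by (rule suminf_diff[OF smy2 smp2, symmetric])
    show ?thesis by (rule arRy[OF B1 B2 C1 D1 y(4) Rb_def])
  qed

  define P where "P = (\<lambda>t. hierarchy t \<and> \<not> contains_sub t T)"
  define f where "f = (\<lambda>N. \<Sum>t\<in>{t. P t \<and> leaves t < N}. y ^ leaves t)"
  have PH: "\<And>t. P t \<Longrightarrow> hierarchy t" unfolding P_def by simp
  have PC: "\<And>M x. P (Node M) \<Longrightarrow> x \<in># M \<Longrightarrow> P x" unfolding P_def by (auto simp: hierarchy_Node contains_Node)
  have f_nn: "0 \<le> f N" for N unfolding f_def using y0 by (auto intro: sum_nonneg)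
  have f_le_H: "f N \<le> (\<Sum>t\<in>HS N. y ^ leaves t)" for N
    unfolding f_def by (rule sum_mono2[OF finite_HS]) (use y0 in \<open>auto simp: HS_def P_def\<close>)
  have f_mono: "f N \<le> f N'" if "N \<le> N'" for N N'
    unfolding f_def by (rule sum_mono2[OF finite_P[OF PH]]) (use y0 that in auto)
  have f_eq: "f N = (\<Sum>n<N. a n * y^n)" for N
    unfolding f_def P_def a_def by (rule As_eq)
  obtain CT where CT: "T = Node CT" by (cases T)
  have CT_ne: "CT \<noteq> {#}" using lT m2 CT by auto
  have CT_size: "2 \<le> size CT" using hier_size2 hT CT CT_ne by auto
  have wtCT: "wt y CT = y^m" using lT CT CT_ne by (simp add: wt_def)
  have iterA: "f N \<le> ln 2 - Rb" if "N \<ge> m" for N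
  proof (rule iter_gen[where Nst=m and d="y^m" and y=y and Rb=Rb and f=f, OF _ _ _ f_nn Rb0 that])
    fix N assume N: "m \<le> N"
    define W where "W = (\<Sum>t\<in>{t. P t \<and> leaves t < N}. y ^ leaves t)"
    define R where "R = (\<Sum>t\<in>{t. P t \<and> leaves t < N}. rr (y ^ leaves t))"
    have E: "{CT} \<subseteq> {M \<in> MSb {t. P t \<and> leaves t < N} (N+2). 2 \<le> size M \<and> \<not> P (Node M)}"
    proof -
      have "x \<in> {t. P t \<and> leaves t < N}" if x: "x \<in># CT" for x
      proof -
        have lx: "leaves x < m" using child_less[OF CT_size x] CT lT by simp
        have "\<not> contains_sub x T"
        proof
          assume "contains_sub x T"
          then have "leaves T \<le> leaves x" unfolding contains_sub_def by (rule subtree_leaves)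
          then show False using lx lT by simp
        qed
        then show ?thesis using hT CT x lx N unfolding P_def by (auto simp: hierarchy_Node)
      qed
      moreover have "count CT t < N + 2" for t using count_le_leaves[of CT t] CT lT N by simp
      moreover have "\<not> P (Node CT)" unfolding P_def contains_sub_def using CT subtree_of.refl by auto
      ultimately show ?thesis using CT_size unfolding MSb_def by auto
    qed
    have st: "f (Suc N) \<le> y + exp (W + R) - 1 - W - sum (wt y) {CT}"
      using step_gen[where P=P and y=y and E="{CT}" and N=N, OF PH PC y0 E] unfolding W_def R_def f_def by simp
    have "R \<le> (\<Sum>t\<in>HS N. rr (y ^ leaves t))"
      unfolding R_def by (rule sum_mono2[OF finite_HS]) (use y0 in \<open>auto simp: HS_def P_def intro!: rr_nonneg zpow_lt1\<close>)
    also have "\<dots> = (\<Sum>n<N. h n * rr (y^n))" by (rule Hs_h)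
    also have "\<dots> \<le> Rb" by (rule Ry)
    finally have "exp (W + R) \<le> exp (W + Rb)" by simp
    then have ex: "exp (W + R) \<le> exp (W + Rb)" .
    have st2: "f (Suc N) \<le> y + exp (W + R) - 1 - W - y^m" using st wtCT by simp
    have "f (Suc N) \<le> y - y^m + exp (W + Rb) - 1 - W" by (rule ar2[OF st2 ex])
    then show "f (Suc N) \<le> y - y^m + exp (f N + Rb) - 1 - f N"
      unfolding W_def f_def .
  next
    have "f m \<le> (\<Sum>n<m. h n * y^n)" using f_le_H[of m] Hs_h[where N=m and g="\<lambda>k. y^k"] by simp
    then show "f m \<le> ln 2 - Rb" by (rule arBase[OF less_imp_le[OF pm0] _ y(6) Rp_Hm Rb_def eps_def])
  next
    have "p^m \<le> y^m" using pp y by (simp add: power_mono)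
    then show "y - y^m + 2 * Rb \<le> 2 * ln 2 - 1" by (rule arCC[OF _ y(5) Rp_c Rb_def eps_def c_def])
  qed
  have sma: "summable (\<lambda>n. a n * y^n)"
  proof (rule summableI_nonneg_bounded[where x="ln 2"])
    fix n show "0 \<le> a n * y ^ n" using a_nn y0 by simp
    have f1: "f n \<le> f (max n m)" by (rule f_mono) simp
    have f2: "f (max n m) \<le> ln 2 - Rb" by (rule iterA) simp
    show "(\<Sum>i<n. a i * y ^ i) \<le> ln 2" by (rule arFin[OF f1 f2 Rb0 f_eq[of n]])
  qed
  have "norm y \<le> conv_radius a" by (rule conv_radius_geI[OF sma])
  then have yl: "ereal y \<le> conv_radius a" using y0 by simp
  have "conv_radius h < ereal y" using p y(1) by simp
  then have "conv_radius h < conv_radius a" using yl by (rule order_less_le_trans)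
  then show ?thesis unfolding h_def a_def .
qed


theorem theorem3p3:
  fixes T :: tree and m :: nat
  assumes "m \<ge> 2" and "hierarchy T" and "leaves T = m"
  shows "conv_radius (\<lambda>n. real (H n)) < conv_radius (\<lambda>n. real (H_avoid T n))"
  by (rule main_thm[OF assms])

end
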